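(* Let $k$ be an algebraically closed field and let $A=kQ/I$ be a gentle algebra. Then the (nonzero) maximal paths in $(Q,I)$ form a $k$-basis of $\mathrm{soc}_{A^e}A$, the socle of $A$ as a module over its enveloping algebra $A^e=A\otimes_k A^{op}$ (i.e. as an $A$-$A$-bimodule).
   Context: $Q$ is a finite connected quiver, $I$ an admissible ideal, paths composed left to right. A path is in $(Q,I)$ if it is not in $I$; it is maximal if for every arrow $\alpha$, $\alpha p\in I$ and $p\alpha\in I$. Gentle means: each vertex is the start of at most two arrows and the end of at most two arrows; for each arrow $\alpha$ at most one arrow $\beta$ with $\alpha\beta\notin I$ and at most one $\gamma$ with $\gamma\alpha\notin I$; $I$ is generated by paths of length 2; for each arrow $\alpha$ at most one arrow $\delta$ with $\alpha\delta\in I$ and at most one $\varepsilon$ with $\varepsilon\alpha\in I$. *)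

theory Defs
  imports "HOL-Computational_Algebra.Polynomial"
begin

text \<open>A path is a pair (v, as): a start vertex v and a list of arrows as, composed left to right;
  the trivial path at v is (v, []).\<close>

type_synonym ('v, 'a) qpath = "'v \<times> 'a list"

definition quiver :: "'v set \<Rightarrow> 'a set \<Rightarrow> ('a \<Rightarrow> 'v) \<Rightarrow> ('a \<Rightarrow> 'v) \<Rightarrow> bool" where
  "quiver V E s t \<longleftrightarrow> (\<forall>\<alpha>\<in>E. s \<alpha> \<in> V \<and> t \<alpha> \<in> V)"

definition finite_connected_quiver :: "'v set \<Rightarrow> 'a set \<Rightarrow> ('a \<Rightarrow> 'v) \<Rightarrow> ('a \<Rightarrow> 'v) \<Rightarrow> bool" where
  "finite_connected_quiver V E s t \<longleftrightarrow> quiver V E s t \<and> finite V \<and> finite E \<and> V \<noteq> {} \<and>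
     (\<forall>u\<in>V. \<forall>v\<in>V. (u, v) \<in> (\<Union>\<alpha>\<in>E. {(s \<alpha>, t \<alpha>), (t \<alpha>, s \<alpha>)})\<^sup>*)"

definition valid_path :: "'v set \<Rightarrow> 'a set \<Rightarrow> ('a \<Rightarrow> 'v) \<Rightarrow> ('a \<Rightarrow> 'v) \<Rightarrow> ('v, 'a) qpath \<Rightarrow> bool" where
  "valid_path V E s t p \<longleftrightarrow> fst p \<in> V \<and> set (snd p) \<subseteq> E \<and>
     (snd p \<noteq> [] \<longrightarrow> s (hd (snd p)) = fst p) \<and>
     (\<forall>i. Suc i < length (snd p) \<longrightarrow> t (snd p ! i) = s (snd p ! Suc i))"

definition ptarget :: "('a \<Rightarrow> 'v) \<Rightarrow> ('v, 'a) qpath \<Rightarrow> 'v" where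
  "ptarget t p = (if snd p = [] then fst p else t (last (snd p)))"

definition arrow_path :: "('a \<Rightarrow> 'v) \<Rightarrow> 'a \<Rightarrow> ('v, 'a) qpath" where
  "arrow_path s \<alpha> = (s \<alpha>, [\<alpha>])"

text \<open>Path algebra kQ: finitely supported k-valued functions on the paths of Q.\<close>

definition pathalg :: "'v set \<Rightarrow> 'a set \<Rightarrow> ('a \<Rightarrow> 'v) \<Rightarrow> ('a \<Rightarrow> 'v) \<Rightarrow> (('v, 'a) qpath \<Rightarrow> 'k::field) set" where
  "pathalg V E s t = {f. finite {p. f p \<noteq> 0} \<and> (\<forall>p. f p \<noteq> 0 \<longrightarrow> valid_path V E s t p)}"

definition delta :: "('v, 'a) qpath \<Rightarrow> ('v, 'a) qpath \<Rightarrow> 'k::field" where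
  "delta p = (\<lambda>r. if r = p then 1 else 0)"

definition pmult :: "('a \<Rightarrow> 'v) \<Rightarrow> (('v, 'a) qpath \<Rightarrow> 'k::field) \<Rightarrow> (('v, 'a) qpath \<Rightarrow> 'k) \<Rightarrow> ('v, 'a) qpath \<Rightarrow> 'k" where
  "pmult t f g = (\<lambda>r. \<Sum>(p, q) \<in> {(p, q). f p \<noteq> 0 \<and> g q \<noteq> 0 \<and> ptarget t p = fst q \<and> (fst p, snd p @ snd q) = r}.
                        f p * g q)"

definition is_ideal :: "'v set \<Rightarrow> 'a set \<Rightarrow> ('a \<Rightarrow> 'v) \<Rightarrow> ('a \<Rightarrow> 'v) \<Rightarrow> (('v, 'a) qpath \<Rightarrow> 'k::field) set \<Rightarrow> bool" where
  "is_ideal V E s t J \<longleftrightarrow> J \<subseteq> pathalg V E s t \<and> (\<lambda>_. 0) \<in> J \<and>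
     (\<forall>f\<in>J. \<forall>g\<in>J. (\<lambda>r. f r + g r) \<in> J) \<and>
     (\<forall>c. \<forall>f\<in>J. (\<lambda>r. c * f r) \<in> J) \<and>
     (\<forall>f\<in>J. \<forall>g\<in>pathalg V E s t. pmult t g f \<in> J \<and> pmult t f g \<in> J)"

definition gen_ideal :: "'v set \<Rightarrow> 'a set \<Rightarrow> ('a \<Rightarrow> 'v) \<Rightarrow> ('a \<Rightarrow> 'v) \<Rightarrow> ('v, 'a) qpath set \<Rightarrow> (('v, 'a) qpath \<Rightarrow> 'k::field) set" where
  "gen_ideal V E s t R = \<Inter> {J. is_ideal V E s t J \<and> (\<forall>p\<in>R. delta p \<in> J)}"

text \<open>Admissibility for an ideal generated by paths of length 2 (automatically contained in
  the square of the arrow ideal): some power R_Q^m of the arrow ideal lies in I, i.e. all paths of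
  length at least m lie in I.\<close>

definition admissible :: "'v set \<Rightarrow> 'a set \<Rightarrow> ('a \<Rightarrow> 'v) \<Rightarrow> ('a \<Rightarrow> 'v) \<Rightarrow> (('v, 'a) qpath \<Rightarrow> 'k::field) set \<Rightarrow> bool" where
  "admissible V E s t I \<longleftrightarrow> is_ideal V E s t I \<and>
     (\<forall>f\<in>I. \<forall>p. f p \<noteq> 0 \<longrightarrow> length (snd p) \<ge> 2) \<and>
     (\<exists>m\<ge>2. \<forall>p. valid_path V E s t p \<and> length (snd p) \<ge> m \<longrightarrow> delta p \<in> I)"

definition gentle :: "'v set \<Rightarrow> 'a set \<Rightarrow> ('a \<Rightarrow> 'v) \<Rightarrow> ('a \<Rightarrow> 'v) \<Rightarrow> ('v, 'a) qpath set \<Rightarrow> (('v, 'a) qpath \<Rightarrow> 'k::field) set \<Rightarrow> bool" where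
  "gentle V E s t R I \<longleftrightarrow>
     (let ap = (\<lambda>\<alpha> \<beta>. pmult t (delta (arrow_path s \<alpha>)) (delta (arrow_path s \<beta>)) :: ('v, 'a) qpath \<Rightarrow> 'k) in
     I = gen_ideal V E s t R \<and> admissible V E s t I \<and>
     (\<forall>p\<in>R. valid_path V E s t p \<and> length (snd p) = 2) \<and>
     (\<forall>v\<in>V. card {\<alpha>\<in>E. s \<alpha> = v} \<le> 2 \<and> card {\<alpha>\<in>E. t \<alpha> = v} \<le> 2) \<and>
     (\<forall>\<alpha>\<in>E. \<forall>\<beta>\<in>E. \<forall>\<beta>'\<in>E. ap \<alpha> \<beta> \<notin> I \<and> ap \<alpha> \<beta>' \<notin> I \<longrightarrow> \<beta> = \<beta>') \<and>
     (\<forall>\<alpha>\<in>E. \<forall>\<gamma>\<in>E. \<forall>\<gamma>'\<in>E. ap \<gamma> \<alpha> \<notin> I \<and> ap \<gamma>' \<alpha> \<notin> I \<longrightarrow> \<gamma> = \<gamma>') \<and>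
     (\<forall>\<alpha>\<in>E. \<forall>\<delta>\<in>E. \<forall>\<delta>'\<in>E. t \<alpha> = s \<delta> \<and> t \<alpha> = s \<delta>' \<and> ap \<alpha> \<delta> \<in> I \<and> ap \<alpha> \<delta>' \<in> I \<longrightarrow> \<delta> = \<delta>') \<and>
     (\<forall>\<alpha>\<in>E. \<forall>\<epsilon>\<in>E. \<forall>\<epsilon>'\<in>E. t \<epsilon> = s \<alpha> \<and> t \<epsilon>' = s \<alpha> \<and> ap \<epsilon> \<alpha> \<in> I \<and> ap \<epsilon>' \<alpha> \<in> I \<longrightarrow> \<epsilon> = \<epsilon>'))"

definition maximal_paths :: "'v set \<Rightarrow> 'a set \<Rightarrow> ('a \<Rightarrow> 'v) \<Rightarrow> ('a \<Rightarrow> 'v) \<Rightarrow> (('v, 'a) qpath \<Rightarrow> 'k::field) set \<Rightarrow> ('v, 'a) qpath set" where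
  "maximal_paths V E s t I = {p. valid_path V E s t p \<and> delta p \<notin> I \<and>
     (\<forall>\<alpha>\<in>E. pmult t (delta (arrow_path s \<alpha>)) (delta p) \<in> I \<and> pmult t (delta p) (delta (arrow_path s \<alpha>)) \<in> I)}"

text \<open>Sub-bimodules of A = kQ/I are the ideals J/I with I \<subseteq> J.  A simple sub-bimodule
  corresponds to an ideal J minimal among ideals strictly containing I; the socle
  soc_{A^e} A (sum of simple sub-bimodules) corresponds to the preimage below.\<close>

definition minimal_over :: "'v set \<Rightarrow> 'a set \<Rightarrow> ('a \<Rightarrow> 'v) \<Rightarrow> ('a \<Rightarrow> 'v) \<Rightarrow> (('v, 'a) qpath \<Rightarrow> 'k::field) set \<Rightarrow> (('v, 'a) qpath \<Rightarrow> 'k) set \<Rightarrow> bool" where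
  "minimal_over V E s t I J \<longleftrightarrow> is_ideal V E s t J \<and> I \<subset> J \<and>
     (\<forall>K. is_ideal V E s t K \<and> I \<subseteq> K \<and> K \<subseteq> J \<longrightarrow> K = I \<or> K = J)"

definition socle_preimage :: "'v set \<Rightarrow> 'a set \<Rightarrow> ('a \<Rightarrow> 'v) \<Rightarrow> ('a \<Rightarrow> 'v) \<Rightarrow> (('v, 'a) qpath \<Rightarrow> 'k::field) set \<Rightarrow> (('v, 'a) qpath \<Rightarrow> 'k) set" where
  "socle_preimage V E s t I = \<Inter> {K. is_ideal V E s t K \<and> I \<subseteq> K \<and> (\<forall>J. minimal_over V E s t I J \<longrightarrow> J \<subseteq> K)}"

definition alg_closed :: "'k::field itself \<Rightarrow> bool" where
  "alg_closed _ \<longleftrightarrow> (\<forall>p :: 'k poly. degree p \<ge> 1 \<longrightarrow> (\<exists>x. poly p x = 0))"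

end

theory Submission
  imports Defs
begin


lemma valid_Nil: "valid_path V E s t (v, []) \<longleftrightarrow> v \<in> V"
  by (simp add: valid_path_def)

lemma valid_Cons:
  assumes q: "quiver V E s t"
  shows "valid_path V E s t (v, a # as) \<longleftrightarrow> v \<in> V \<and> a \<in> E \<and> s a = v \<and> valid_path V E s t (t a, as)"
proof
  assume h: "valid_path V E s t (v, a # as)"
  have aE: "a \<in> E" "s a = v" "v \<in> V" "set as \<subseteq> E" using h by (auto simp: valid_path_def)
  have ch: "\<And>i. Suc i < length (a # as) \<Longrightarrow> t ((a#as) ! i) = s ((a#as) ! Suc i)"
    using h by (auto simp: valid_path_def)
  have "t a \<in> V" using q aE by (auto simp: quiver_def)
  moreover have "as \<noteq> [] \<longrightarrow> s (hd as) = t a"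
    using ch[of 0] by (cases as) auto
  moreover have "\<forall>i. Suc i < length as \<longrightarrow> t (as ! i) = s (as ! Suc i)"
    using ch by (metis Suc_less_eq length_Cons nth_Cons_Suc)
  ultimately show "v \<in> V \<and> a \<in> E \<and> s a = v \<and> valid_path V E s t (t a, as)"
    using aE by (simp add: valid_path_def)
next
  assume h: "v \<in> V \<and> a \<in> E \<and> s a = v \<and> valid_path V E s t (t a, as)"
  have ch: "\<forall>i. Suc i < length as \<longrightarrow> t (as ! i) = s (as ! Suc i)"
    and hd: "as \<noteq> [] \<longrightarrow> s (hd as) = t a" and sE: "set as \<subseteq> E"
    using h by (auto simp: valid_path_def)
  have "\<forall>i. Suc i < length (a#as) \<longrightarrow> t ((a#as) ! i) = s ((a#as) ! Suc i)"
  proof (intro allI impI)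
    fix i assume i: "Suc i < length (a#as)"
    show "t ((a#as) ! i) = s ((a#as) ! Suc i)"
    proof (cases i)
      case 0 then show ?thesis using hd i by (cases as) auto
    next
      case (Suc j) then show ?thesis using ch i by auto
    qed
  qed
  then show "valid_path V E s t (v, a # as)" using h sE by (simp add: valid_path_def)
qed

lemma ptarget_Cons: "ptarget t (v, a # as) = ptarget t (t a, as)"
  by (simp add: ptarget_def)

lemma ptarget_snoc: "ptarget t (v, xs @ [a]) = t a"
  by (simp add: ptarget_def)

lemma valid_concat:
  assumes q: "quiver V E s t"
  shows "valid_path V E s t (v, xs) \<Longrightarrow> valid_path V E s t (w, ys) \<Longrightarrow> ptarget t (v, xs) = w
     \<Longrightarrow> valid_path V E s t (v, xs @ ys)"
proof (induction xs arbitrary: v)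
  case Nil then show ?case by (simp add: ptarget_def)
next
  case (Cons a xs)
  then show ?case using valid_Cons[OF q] ptarget_Cons by (metis append_Cons)
qed

lemma valid_append:
  assumes q: "quiver V E s t"
  shows "valid_path V E s t (v, xs @ ys) \<Longrightarrow> valid_path V E s t (v, xs) \<and> valid_path V E s t (ptarget t (v, xs), ys)"
proof (induction xs arbitrary: v)
  case Nil then show ?case by (simp add: ptarget_def valid_path_def)
next
  case (Cons a xs)
  then show ?case using valid_Cons[OF q] ptarget_Cons by (metis append_Cons)
qed

lemma valid_snoc:
  assumes q: "quiver V E s t" and h: "valid_path V E s t (v, xs @ [a])"
  shows "valid_path V E s t (v, xs) \<and> a \<in> E \<and> s a = ptarget t (v, xs) \<and> valid_path V E s t (s a, [a])"
  using valid_append[OF q h] valid_Cons[OF q] by auto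


lemma pmult_nz:
  assumes "pmult t f g r \<noteq> 0"
  shows "\<exists>p q. f p \<noteq> 0 \<and> g q \<noteq> 0 \<and> ptarget t p = fst q \<and> r = (fst p, snd p @ snd q)"
proof (rule ccontr)
  assume "\<not> ?thesis"
  then have "{(p, q). f p \<noteq> 0 \<and> g q \<noteq> 0 \<and> ptarget t p = fst q \<and> (fst p, snd p @ snd q) = r} = {}"
    by auto
  then have "pmult t f g r = 0" unfolding pmult_def by (metis sum.empty)
  then show False using assms by simp
qed

lemma pmult_single:
  fixes g :: "_ \<Rightarrow> 'k::field"
  assumes pt: "ptarget t a = fst q"
  shows "pmult t (delta a) g (fst a, snd a @ snd q) = g q"
proof -
  let ?A = "{(p, q'). delta a p \<noteq> (0::'k) \<and> g q' \<noteq> 0 \<and> ptarget t p = fst q' \<and> (fst p, snd p @ snd q') = (fst a, snd a @ snd q)}"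
  have e: "pmult t (delta a) g (fst a, snd a @ snd q) = (\<Sum>(p, q')\<in>?A. delta a p * g q')"
    unfolding pmult_def ..
  have A: "?A = (if g q \<noteq> 0 then {(a, q)} else {})"
  proof (intro equalityI subsetI)
    fix x assume "x \<in> ?A"
    moreover obtain p q' where x: "x = (p, q')" by (cases x)
    ultimately have h: "delta a p \<noteq> (0::'k)" "g q' \<noteq> 0" "ptarget t p = fst q'"
      "(fst p, snd p @ snd q') = (fst a, snd a @ snd q)" by simp_all
    from h have pa: "p = a" by (simp add: delta_def split: if_splits)
    with h pt have "q' = q" by (simp add: prod_eq_iff)
    then show "x \<in> (if g q \<noteq> 0 then {(a, q)} else {})" using x pa h by simp
  next
    fix x assume "x \<in> (if g q \<noteq> 0 then {(a, q)} else {})"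
    then have "g q \<noteq> 0" "x = (a, q)" by (auto split: if_splits)
    then show "x \<in> ?A" using pt by (simp add: delta_def)
  qed
  show ?thesis
  proof (cases "g q = 0")
    case True then show ?thesis unfolding e A by simp
  next
    case False then show ?thesis unfolding e A by (simp add: delta_def)
  qed
qed

lemma pmult_single_right:
  fixes g :: "_ \<Rightarrow> 'k::field"
  assumes pt: "ptarget t q = fst b"
  shows "pmult t g (delta b) (fst q, snd q @ snd b) = g q"
proof -
  let ?A = "{(p, b'). g p \<noteq> (0::'k) \<and> delta b b' \<noteq> (0::'k) \<and> ptarget t p = fst b' \<and> (fst p, snd p @ snd b') = (fst q, snd q @ snd b)}"
  have e: "pmult t g (delta b) (fst q, snd q @ snd b) = (\<Sum>(p, b')\<in>?A. g p * delta b b')"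
    unfolding pmult_def ..
  have A: "?A = (if g q \<noteq> 0 then {(q, b)} else {})"
  proof (intro equalityI subsetI)
    fix x assume "x \<in> ?A"
    moreover obtain p b' where x: "x = (p, b')" by (cases x)
    ultimately have h: "g p \<noteq> (0::'k)" "delta b b' \<noteq> (0::'k)" "ptarget t p = fst b'"
      "(fst p, snd p @ snd b') = (fst q, snd q @ snd b)" by simp_all
    from h have pa: "b' = b" by (simp add: delta_def split: if_splits)
    with h pt have "p = q" by (simp add: prod_eq_iff)
    then show "x \<in> (if g q \<noteq> 0 then {(q, b)} else {})" using x pa h by simp
  next
    fix x assume "x \<in> (if g q \<noteq> 0 then {(q, b)} else {})"
    then have "g q \<noteq> 0" "x = (q, b)" by (auto split: if_splits)
    then show "x \<in> ?A" using pt by (simp add: delta_def)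
  qed
  show ?thesis
  proof (cases "g q = 0")
    case True then show ?thesis unfolding e A by simp
  next
    case False then show ?thesis unfolding e A by (simp add: delta_def)
  qed
qed

lemma pmult_delta:
  "pmult t (delta p) (delta q) = (if ptarget t p = fst q then delta (fst p, snd p @ snd q) else (\<lambda>_. (0::'b::field)))"
proof (rule ext)
  fix r
  show "pmult t (delta p) (delta q) r = (if ptarget t p = fst q then delta (fst p, snd p @ snd q) else (\<lambda>_. (0::'b::field))) r"
  proof (cases "pmult t (delta p) (delta q) r = (0::'b)")
    case True
    show ?thesis
    proof (cases "ptarget t p = fst q \<and> r = (fst p, snd p @ snd q)")
      case True
      then have "pmult t (delta p) (delta q) r = (delta p p :: 'b)"
        using pmult_single_right[of t p q "delta p"] by simp
      then show ?thesis using \<open>pmult t (delta p) (delta q) r = 0\<close> by (simp add: delta_def)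
    next
      case False
      then show ?thesis using True by (auto simp: delta_def)
    qed
  next
    case False
    from pmult_nz[OF False] obtain p' q' where "delta p p' \<noteq> (0::'b)" "delta q q' \<noteq> (0::'b)"
      "ptarget t p' = fst q'" "r = (fst p', snd p' @ snd q')" by blast
    then have pq: "p' = p" "q' = q" "ptarget t p = fst q" "r = (fst p, snd p @ snd q)"
      by (auto simp: delta_def split: if_splits)
    then have "pmult t (delta p) (delta q) r = (delta p p :: 'b)"
      using pmult_single_right[of t p q "delta p"] by simp
    then show ?thesis using pq by (simp add: delta_def)
  qed
qed

lemma delta_pathalg: "valid_path V E s t p \<Longrightarrow> (delta p :: _ \<Rightarrow> 'b::field) \<in> pathalg V E s t"
  by (simp add: pathalg_def delta_def)

lemma pmult_pathalg:
  assumes q: "quiver V E s t" and f: "f \<in> pathalg V E s t" and g: "g \<in> pathalg V E s t"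
  shows "pmult t f g \<in> pathalg V E s t"
proof -
  let ?S = "(\<lambda>(p, q). (fst p, snd p @ snd q)) ` ({p. f p \<noteq> 0} \<times> {q. g q \<noteq> 0})"
  have fin: "finite ?S" using f g by (auto simp: pathalg_def)
  have sub: "{r. pmult t f g r \<noteq> 0} \<subseteq> ?S"
  proof
    fix r assume "r \<in> {r. pmult t f g r \<noteq> 0}"
    then obtain p q where "f p \<noteq> 0 \<and> g q \<noteq> 0 \<and> ptarget t p = fst q \<and> r = (fst p, snd p @ snd q)"
      using pmult_nz by blast
    then show "r \<in> ?S" by (intro image_eqI[of _ _ "(p, q)"]) auto
  qed
  have "\<forall>r. pmult t f g r \<noteq> 0 \<longrightarrow> valid_path V E s t r"
  proof (intro allI impI)
    fix r assume "pmult t f g r \<noteq> 0"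
    then obtain p q where h: "f p \<noteq> 0" "g q \<noteq> 0" "ptarget t p = fst q" "r = (fst p, snd p @ snd q)"
      using pmult_nz by blast
    have "valid_path V E s t p" using h(1) f unfolding pathalg_def by blast
    moreover have "valid_path V E s t q" using h(2) g unfolding pathalg_def by blast
    ultimately show "valid_path V E s t r"
      using valid_concat[OF q, of "fst p" "snd p" "fst q" "snd q"] h by simp
  qed
  moreover have "finite {r. pmult t f g r \<noteq> 0}" using finite_subset[OF sub fin] .
  ultimately show ?thesis unfolding pathalg_def by blast
qed

lemma ideal_sub: "is_ideal V E s t K \<Longrightarrow> K \<subseteq> pathalg V E s t"
  unfolding is_ideal_def by (elim conjE)
lemma ideal_zero: "is_ideal V E s t K \<Longrightarrow> (\<lambda>_. 0) \<in> K"
  unfolding is_ideal_def by (elim conjE)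
lemma ideal_add: "is_ideal V E s t K \<Longrightarrow> f \<in> K \<Longrightarrow> g \<in> K \<Longrightarrow> (\<lambda>r. f r + g r) \<in> K"
  unfolding is_ideal_def by (elim conjE) (drule bspec, assumption, drule bspec, assumption, assumption)
lemma ideal_smult: "is_ideal V E s t K \<Longrightarrow> f \<in> K \<Longrightarrow> (\<lambda>r. c * f r) \<in> K"
  unfolding is_ideal_def by (elim conjE) (drule spec[of _ c], drule bspec, assumption, assumption)
lemma ideal_multL: "is_ideal V E s t K \<Longrightarrow> f \<in> K \<Longrightarrow> g \<in> pathalg V E s t \<Longrightarrow> pmult t g f \<in> K"
  unfolding is_ideal_def by (elim conjE) (drule bspec, assumption, drule bspec, assumption, erule conjunct1)
lemma ideal_multR: "is_ideal V E s t K \<Longrightarrow> f \<in> K \<Longrightarrow> g \<in> pathalg V E s t \<Longrightarrow> pmult t f g \<in> K"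
  unfolding is_ideal_def by (elim conjE) (drule bspec, assumption, drule bspec, assumption, erule conjunct2)
lemma ideal_intro:
  assumes "K \<subseteq> pathalg V E s t" "(\<lambda>_. 0) \<in> K" "\<forall>f\<in>K. \<forall>g\<in>K. (\<lambda>r. f r + g r) \<in> K"
    "\<forall>c. \<forall>f\<in>K. (\<lambda>r. c * f r) \<in> K" "\<forall>f\<in>K. \<forall>g\<in>pathalg V E s t. pmult t g f \<in> K \<and> pmult t f g \<in> K"
  shows "is_ideal V E s t K"
  unfolding is_ideal_def using assms by (intro conjI)

lemma ideal_sum:
  assumes K: "is_ideal V E s t K" and F: "finite F"
  shows "(\<forall>p\<in>F. f p \<in> K) \<Longrightarrow> (\<lambda>r. \<Sum>p\<in>F. c p * f p r) \<in> K"
  using F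
proof (induction F rule: finite_induct)
  case empty
  have "(\<lambda>_. 0) \<in> K" using K by (rule ideal_zero)
  then show ?case by simp
next
  case (insert x F)
  have "f x \<in> K" using insert by simp
  then have a: "(\<lambda>r. c x * f x r) \<in> K" using K by (rule ideal_smult[rotated])
  have b: "(\<lambda>r. \<Sum>p\<in>F. c p * f p r) \<in> K" using insert by simp
  have "(\<lambda>r. (\<lambda>r. c x * f x r) r + (\<lambda>r. \<Sum>p\<in>F. c p * f p r) r) \<in> K"
    using ideal_add[OF K a b] .
  then show ?case using insert by simp
qed

lemma decomp:
  assumes "f \<in> pathalg V E s t"
  shows "f = (\<lambda>r. \<Sum>p\<in>{p. f p \<noteq> 0}. f p * delta p r)"
proof (rule ext)
  fix r
  have fin: "finite {p. f p \<noteq> 0}" using assms by (simp add: pathalg_def)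
  have "(\<Sum>p\<in>{p. f p \<noteq> 0}. f p * delta p r) = (\<Sum>p\<in>{p. f p \<noteq> 0}. if r = p then f p else 0)"
    by (rule sum.cong) (auto simp: delta_def)
  also have "\<dots> = f r" using fin by (simp add: sum.delta)
  finally show "f r = (\<Sum>p\<in>{p. f p \<noteq> 0}. f p * delta p r)" by simp
qed

definition Lset :: "'v set \<Rightarrow> 'a set \<Rightarrow> ('a \<Rightarrow> 'v) \<Rightarrow> ('a \<Rightarrow> 'v) \<Rightarrow> (('v, 'a) qpath \<Rightarrow> bool) \<Rightarrow> (('v, 'a) qpath \<Rightarrow> 'k::field) set" where
  "Lset V E s t P = {h \<in> pathalg V E s t. \<forall>p. h p \<noteq> 0 \<longrightarrow> P p}"

lemma Lset_in_ideal:
  assumes K: "is_ideal V E s t K" and f: "f \<in> Lset V E s t P"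
    and d: "\<And>p. valid_path V E s t p \<Longrightarrow> P p \<Longrightarrow> delta p \<in> K"
  shows "f \<in> K"
proof -
  have fp: "f \<in> pathalg V E s t" and fP: "\<forall>p. f p \<noteq> 0 \<longrightarrow> P p" using f by (auto simp: Lset_def)
  have fin: "finite {p. f p \<noteq> 0}" using fp by (simp add: pathalg_def)
  have "\<forall>p\<in>{p. f p \<noteq> 0}. delta p \<in> K" using fP fp d by (auto simp: pathalg_def)
  then have "(\<lambda>r. \<Sum>p\<in>{p. f p \<noteq> 0}. f p * delta p r) \<in> K" using ideal_sum[OF K fin] by blast
  then show ?thesis using decomp[OF fp] by simp
qed

lemma Lset_ideal:
  assumes q: "quiver V E s t"
    and cl: "\<And>p q. valid_path V E s t p \<Longrightarrow> valid_path V E s t q \<Longrightarrow> ptarget t p = fst q \<Longrightarrow> P p \<or> P q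
             \<Longrightarrow> P (fst p, snd p @ snd q)"
  shows "is_ideal V E s t (Lset V E s t P :: (_ \<Rightarrow> 'k::field) set)"
proof -
  let ?L = "Lset V E s t P :: (_ \<Rightarrow> 'k) set"
  have sub: "?L \<subseteq> pathalg V E s t" by (auto simp: Lset_def)
  have zero: "(\<lambda>_. 0) \<in> ?L" by (simp add: Lset_def pathalg_def)
  have add: "\<forall>f\<in>?L. \<forall>g\<in>?L. (\<lambda>r. f r + g r) \<in> ?L"
  proof (intro ballI)
    fix f g assume f: "f \<in> ?L" and g: "g \<in> ?L"
    have "{r. f r + g r \<noteq> 0} \<subseteq> {r. f r \<noteq> 0} \<union> {r. g r \<noteq> 0}" by auto
    moreover have "finite ({r. f r \<noteq> 0} \<union> {r. g r \<noteq> 0})" using f g by (auto simp: Lset_def pathalg_def)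
    ultimately have "finite {r. f r + g r \<noteq> 0}" by (rule finite_subset)
    moreover have "\<forall>r. f r + g r \<noteq> 0 \<longrightarrow> valid_path V E s t r \<and> P r"
    proof (intro allI impI)
      fix r assume "f r + g r \<noteq> 0"
      then have "f r \<noteq> 0 \<or> g r \<noteq> 0" by auto
      then show "valid_path V E s t r \<and> P r" using f g unfolding Lset_def pathalg_def by blast
    qed
    ultimately show "(\<lambda>r. f r + g r) \<in> ?L" by (simp add: Lset_def pathalg_def)
  qed
  have sc: "\<forall>c. \<forall>f\<in>?L. (\<lambda>r. c * f r) \<in> ?L"
  proof (intro allI ballI)
    fix c and f assume f: "f \<in> ?L"
    have "{r. c * f r \<noteq> 0} \<subseteq> {r. f r \<noteq> 0}" by auto
    moreover have "finite {r. f r \<noteq> 0}" using f unfolding Lset_def pathalg_def by blast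
    ultimately have "finite {r. c * f r \<noteq> 0}" using finite_subset by blast
    moreover have "\<forall>r. c * f r \<noteq> 0 \<longrightarrow> valid_path V E s t r \<and> P r" using f unfolding Lset_def pathalg_def by auto
    ultimately show "(\<lambda>r. c * f r) \<in> ?L" unfolding Lset_def pathalg_def by blast
  qed
  have mul: "\<forall>f\<in>?L. \<forall>g\<in>pathalg V E s t. pmult t g f \<in> ?L \<and> pmult t f g \<in> ?L"
  proof (intro ballI conjI)
    fix f g :: "_ \<Rightarrow> 'k" assume f: "f \<in> ?L" and g: "g \<in> pathalg V E s t"
    have fp: "f \<in> pathalg V E s t" using f by (simp add: Lset_def)
    show "pmult t g f \<in> ?L"
    proof -
      have "\<forall>r. pmult t g f r \<noteq> 0 \<longrightarrow> P r"
      proof (intro allI impI)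
        fix r assume "pmult t g f r \<noteq> 0"
        then obtain p q' where h: "g p \<noteq> 0" "f q' \<noteq> 0" "ptarget t p = fst q'" "r = (fst p, snd p @ snd q')"
          using pmult_nz by blast
        have vp: "valid_path V E s t p" using h(1) g unfolding pathalg_def by blast
        have vq: "valid_path V E s t q'" using h(2) fp unfolding pathalg_def by blast
        have "P q'" using h(2) f unfolding Lset_def by blast
        then show "P r" using cl[OF vp vq h(3)] h(4) by blast
      qed
      then show ?thesis using pmult_pathalg[OF q g fp] by (simp add: Lset_def)
    qed
    show "pmult t f g \<in> ?L"
    proof -
      have "\<forall>r. pmult t f g r \<noteq> 0 \<longrightarrow> P r"
      proof (intro allI impI)
        fix r assume "pmult t f g r \<noteq> 0"
        then obtain p q' where h: "f p \<noteq> 0" "g q' \<noteq> 0" "ptarget t p = fst q'" "r = (fst p, snd p @ snd q')"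
          using pmult_nz by blast
        have vp: "valid_path V E s t p" using h(1) fp unfolding pathalg_def by blast
        have vq: "valid_path V E s t q'" using h(2) g unfolding pathalg_def by blast
        have "P p" using h(1) f unfolding Lset_def by blast
        then show "P r" using cl[OF vp vq h(3)] h(4) by blast
      qed
      then show ?thesis using pmult_pathalg[OF q fp g] by (simp add: Lset_def)
    qed
  qed
  show ?thesis using sub zero add sc mul by (rule ideal_intro)
qed

lemma Ipath_concat:
  assumes q: "quiver V E s t" and I: "is_ideal V E s t I"
    and p: "valid_path V E s t p" and q': "valid_path V E s t q'" and pt: "ptarget t p = fst q'"
    and d: "delta p \<in> I \<or> delta q' \<in> I"
  shows "delta (fst p, snd p @ snd q') \<in> I"
proof -
  have "pmult t (delta p) (delta q') \<in> I"
    using d ideal_multL[OF I _ delta_pathalg[OF p]] ideal_multR[OF I _ delta_pathalg[OF q']] by blast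
  then show ?thesis using pt by (simp add: pmult_delta)
qed



lemma Lset_mono: "(\<And>p. P p \<Longrightarrow> Q p) \<Longrightarrow> Lset V E s t P \<subseteq> Lset V E s t Q"
  unfolding Lset_def by blast

lemma ideal_Int: "is_ideal V E s t K1 \<Longrightarrow> is_ideal V E s t K2 \<Longrightarrow> is_ideal V E s t (K1 \<inter> K2)"
proof (rule ideal_intro)
  assume a: "is_ideal V E s t K1" and b: "is_ideal V E s t K2"
  show "K1 \<inter> K2 \<subseteq> pathalg V E s t" using ideal_sub[OF a] by blast
  show "(\<lambda>_. 0) \<in> K1 \<inter> K2" using ideal_zero[OF a] ideal_zero[OF b] by blast
  show "\<forall>f\<in>K1 \<inter> K2. \<forall>g\<in>K1 \<inter> K2. (\<lambda>r. f r + g r) \<in> K1 \<inter> K2"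
    using ideal_add[OF a] ideal_add[OF b] by blast
  show "\<forall>c. \<forall>f\<in>K1 \<inter> K2. (\<lambda>r. c * f r) \<in> K1 \<inter> K2"
    using ideal_smult[OF a] ideal_smult[OF b] by blast
  show "\<forall>f\<in>K1 \<inter> K2. \<forall>g\<in>pathalg V E s t. pmult t g f \<in> K1 \<inter> K2 \<and> pmult t f g \<in> K1 \<inter> K2"
    using ideal_multL[OF a] ideal_multL[OF b] ideal_multR[OF a] ideal_multR[OF b] by blast
qed

lemma delta_Lset:
  assumes "valid_path V E s t p" "P p"
  shows "(delta p :: _ \<Rightarrow> 'k::field) \<in> Lset V E s t P"
  using assms delta_pathalg[OF assms(1)] unfolding Lset_def by (auto simp: delta_def)

lemma Lset_pathalg: "f \<in> Lset V E s t P \<Longrightarrow> f \<in> pathalg V E s t"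
  unfolding Lset_def by blast

lemma Lset_P: "f \<in> Lset V E s t P \<Longrightarrow> f p \<noteq> 0 \<Longrightarrow> P p"
  unfolding Lset_def by blast

lemma pathalg_valid: "f \<in> pathalg V E s t \<Longrightarrow> f p \<noteq> 0 \<Longrightarrow> valid_path V E s t p"
  unfolding pathalg_def by blast

lemma pathalg_finite: "f \<in> pathalg V E s t \<Longrightarrow> finite {p. f p \<noteq> 0}"
  unfolding pathalg_def by blast

lemma Lset_I:
  assumes "finite {p. f p \<noteq> 0}" "\<And>p. f p \<noteq> 0 \<Longrightarrow> valid_path V E s t p \<and> P p"
  shows "f \<in> Lset V E s t P"
  using assms unfolding Lset_def pathalg_def by blast

lemma sum_delta_at:
  assumes "finite F"
  shows "(\<Sum>p\<in>F. c p * (delta p r :: 'k::field)) = (if r \<in> F then c r else 0)"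
proof -
  have "(\<Sum>p\<in>F. c p * (delta p r :: 'k)) = (\<Sum>p\<in>F. if r = p then c p else 0)"
    by (rule sum.cong) (auto simp: delta_def)
  also have "\<dots> = (if r \<in> F then c r else 0)" using assms by (simp add: sum.delta)
  finally show ?thesis .
qed


lemma maxL:
  fixes I :: "(('v, 'a) qpath \<Rightarrow> 'k::field) set"
  assumes q: "quiver V E s t" and I: "is_ideal V E s t I" and p: "p \<in> maximal_paths V E s t I"
    and vq: "valid_path V E s t r" and pt: "ptarget t r = fst p"
  shows "(fst r, snd r @ snd p) = p \<or> (delta (fst r, snd r @ snd p) :: _ \<Rightarrow> 'k) \<in> I"
proof (cases "snd r = []")
  case True
  then have "ptarget t r = fst r" by (simp add: ptarget_def)
  then show ?thesis using True pt by (simp add: prod_eq_iff)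
next
  case False
  then obtain xs a where sr: "snd r = xs @ [a]" by (metis rev_exhaust)
  have vr: "valid_path V E s t (fst r, xs @ [a])" using vq sr by (metis prod.collapse)
  note vs = valid_snoc[OF q vr]
  have ta: "t a = fst p" using pt sr by (simp add: ptarget_def)
  have vp: "valid_path V E s t p" using p unfolding maximal_paths_def by blast
  have mx: "pmult t (delta (arrow_path s a)) (delta p) \<in> I"
    using p vs unfolding maximal_paths_def by blast
  have "(delta (s a, [a] @ snd p) :: _ \<Rightarrow> 'k) \<in> I"
    using mx ta by (simp add: pmult_delta arrow_path_def ptarget_def)
  moreover have "valid_path V E s t (s a, a # snd p)"
  proof -
    have "s a \<in> V" using vs valid_Cons[OF q, of "s a" a "[]"] by blast
    moreover have "valid_path V E s t (t a, snd p)" using vp by (simp add: ta)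
    ultimately show ?thesis using valid_Cons[OF q, of "s a" a "snd p"] vs by blast
  qed
  moreover have v0: "valid_path V E s t (fst r, xs)" using vs by blast
  moreover have pt0: "ptarget t (fst r, xs) = fst (s a, a # snd p)" using vs by simp
  ultimately have "(delta (fst (fst r, xs), snd (fst r, xs) @ snd (s a, a # snd p)) :: _ \<Rightarrow> 'k) \<in> I"
    using Ipath_concat[OF q I v0 _ pt0] by simp
  then have "(delta (fst r, xs @ a # snd p) :: _ \<Rightarrow> 'k) \<in> I" by simp
  moreover have "snd r @ snd p = xs @ a # snd p" using sr by simp
  ultimately show ?thesis by simp
qed

lemma maxR:
  fixes I :: "(('v, 'a) qpath \<Rightarrow> 'k::field) set"
  assumes q: "quiver V E s t" and I: "is_ideal V E s t I" and p: "p \<in> maximal_paths V E s t I"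
    and vq: "valid_path V E s t r" and pt: "ptarget t p = fst r"
  shows "(fst p, snd p @ snd r) = p \<or> (delta (fst p, snd p @ snd r) :: _ \<Rightarrow> 'k) \<in> I"
proof (cases "snd r = []")
  case True
  then show ?thesis by simp
next
  case False
  then obtain a ys where sr: "snd r = a # ys" by (metis neq_Nil_conv)
  have vr: "valid_path V E s t (fst r, a # ys)" using vq sr by (metis prod.collapse)
  have vs: "fst r \<in> V" "a \<in> E" "s a = fst r" "valid_path V E s t (t a, ys)"
    using valid_Cons[OF q, THEN iffD1, OF vr] by blast+
  have vp: "valid_path V E s t p" using p unfolding maximal_paths_def by blast
  have mx: "pmult t (delta p) (delta (arrow_path s a)) \<in> I"
    using p vs(2) unfolding maximal_paths_def by blast
  have pa: "ptarget t p = fst (s a, [a])" using pt vs(3) by simp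
  have "pmult t (delta p) (delta (s a, [a])) = (delta (fst p, snd p @ [a]) :: _ \<Rightarrow> 'k)"
    using pa by (simp add: pmult_delta)
  then have d1: "(delta (fst p, snd p @ [a]) :: _ \<Rightarrow> 'k) \<in> I"
    using mx by (simp add: arrow_path_def)
  have va: "valid_path V E s t (s a, [a])"
  proof -
    have "t a \<in> V" using q vs(2) unfolding quiver_def by blast
    then have "valid_path V E s t (t a, [])" by (simp add: valid_Nil)
    then show ?thesis using valid_Cons[OF q, of "s a" a "[]"] vs by simp
  qed
  have v1: "valid_path V E s t (fst p, snd p @ [a])"
    using valid_concat[OF q, of "fst p" "snd p" "s a" "[a]"] vp pa va by simp
  have pt1: "ptarget t (fst p, snd p @ [a]) = fst (t a, ys)" by (simp add: ptarget_def)
  have "(delta (fst (fst p, snd p @ [a]), snd (fst p, snd p @ [a]) @ snd (t a, ys)) :: _ \<Rightarrow> 'k) \<in> I"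
    using Ipath_concat[OF q I v1 vs(4) pt1] d1 by blast
  then have "(delta (fst p, (snd p @ [a]) @ ys) :: _ \<Rightarrow> 'k) \<in> I" by simp
  moreover have "snd p @ snd r = (snd p @ [a]) @ ys" using sr by simp
  ultimately show ?thesis by simp
qed


theorem lemma2p1:
  fixes V :: "'v set" and E :: "'a set" and s t :: "'a \<Rightarrow> 'v"
    and R :: "('v, 'a) qpath set" and I :: "(('v, 'a) qpath \<Rightarrow> 'k::field) set"
  assumes "alg_closed TYPE('k)"
    and "finite_connected_quiver V E s t"
    and "gentle V E s t R I"
  shows "(\<forall>F c. F \<subseteq> maximal_paths V E s t I \<and> finite F \<and> (\<lambda>r. \<Sum>p\<in>F. c p * delta p r) \<in> I
            \<longrightarrow> (\<forall>p\<in>F. c p = 0))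
       \<and> socle_preimage V E s t I =
           {(\<lambda>r. x r + (\<Sum>p\<in>F. c p * delta p r)) | x F c.
               x \<in> I \<and> F \<subseteq> maximal_paths V E s t I \<and> finite F}"
proof -
  have q: "quiver V E s t" using assms(2) unfolding finite_connected_quiver_def by blast
  have g: "I = gen_ideal V E s t R \<and> admissible V E s t I \<and> (\<forall>p\<in>R. valid_path V E s t p \<and> length (snd p) = 2)"
    using assms(3) unfolding gentle_def Let_def by (elim conjE) (intro conjI; assumption)
  have Igen: "I = gen_ideal V E s t R" using g by blast
  have adm: "admissible V E s t I" using g by blast
  have Rv: "\<And>p. p \<in> R \<Longrightarrow> valid_path V E s t p" using g by blast
  have Iid: "is_ideal V E s t I" using adm unfolding admissible_def by blast
  obtain m where adm2: "\<And>p. valid_path V E s t p \<Longrightarrow> m \<le> length (snd p) \<Longrightarrow> delta p \<in> I"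
    using adm unfolding admissible_def by blast
  define Mx where "Mx = maximal_paths V E s t I"
  have Mx_valid: "\<And>p. p \<in> Mx \<Longrightarrow> valid_path V E s t p" unfolding Mx_def maximal_paths_def by blast
  have Mx_notI: "\<And>p. p \<in> Mx \<Longrightarrow> delta p \<notin> I" unfolding Mx_def maximal_paths_def by blast
  have IclA: "\<And>p r. valid_path V E s t p \<Longrightarrow> valid_path V E s t r \<Longrightarrow> ptarget t p = fst r
      \<Longrightarrow> delta p \<in> I \<or> delta r \<in> I \<Longrightarrow> delta (fst p, snd p @ snd r) \<in> I"
    using Ipath_concat[OF q Iid] by blast
  define MI where "MI = (Lset V E s t (\<lambda>p. delta p \<in> I) :: (('v, 'a) qpath \<Rightarrow> 'k) set)"
  have MI_id: "is_ideal V E s t MI" unfolding MI_def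
    by (rule Lset_ideal[OF q]) (rule IclA)
  have Imono: "I = MI"
  proof
    show "MI \<subseteq> I"
    proof
      fix f assume "f \<in> MI"
      then show "f \<in> I" unfolding MI_def by (rule Lset_in_ideal[OF Iid])
    qed
  next
    have "\<forall>p\<in>R. delta p \<in> MI"
    proof
      fix p assume pR: "p \<in> R"
      have "delta p \<in> gen_ideal V E s t R" using pR unfolding gen_ideal_def by blast
      then have "delta p \<in> I" using Igen by simp
      then show "delta p \<in> MI" unfolding MI_def by (rule delta_Lset[OF Rv[OF pR]])
    qed
    then have "gen_ideal V E s t R \<subseteq> MI" using MI_id unfolding gen_ideal_def by blast
    then show "I \<subseteq> MI" using Igen by simp
  qed
  have I_coef: "\<And>f p. f \<in> I \<Longrightarrow> f p \<noteq> 0 \<Longrightarrow> delta p \<in> I"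
    using Imono unfolding MI_def by (metis Lset_P)
  have part1: "\<forall>F c. F \<subseteq> Mx \<and> finite F \<and> (\<lambda>r. \<Sum>p\<in>F. c p * delta p r) \<in> I \<longrightarrow> (\<forall>p\<in>F. c p = 0)"
  proof (intro allI impI ballI)
    fix F c p assume h: "F \<subseteq> Mx \<and> finite F \<and> (\<lambda>r. \<Sum>p\<in>F. c p * delta p r) \<in> I" and pF: "p \<in> F"
    show "c p = 0"
    proof (rule ccontr)
      assume "c p \<noteq> 0"
      moreover have "(\<lambda>r. \<Sum>p\<in>F. c p * delta p r) p = c p" using h pF by (simp add: sum_delta_at)
      ultimately have "delta p \<in> I" using I_coef h by (metis (no_types, lifting))
      then show False using Mx_notI pF h by blast
    qed
  qed

  define P where "P = (\<lambda>p. delta p \<in> I \<or> p \<in> Mx)"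
  define S where "S = (Lset V E s t P :: (('v, 'a) qpath \<Rightarrow> 'k) set)"
  have S_id: "is_ideal V E s t S" unfolding S_def
  proof (rule Lset_ideal[OF q])
    fix p r assume vp: "valid_path V E s t p" and vr: "valid_path V E s t r"
      and pt: "ptarget t p = fst r" and h: "P p \<or> P r"
    show "P (fst p, snd p @ snd r)"
    proof (cases "delta p \<in> I \<or> delta r \<in> I")
      case True then show ?thesis unfolding P_def using IclA[OF vp vr pt] by blast
    next
      case False
      then have "p \<in> Mx \<or> r \<in> Mx" using h unfolding P_def by blast
      then show ?thesis
      proof
        assume "p \<in> Mx"
        then have pM: "p \<in> maximal_paths V E s t I" unfolding Mx_def .
        from maxR[OF q Iid pM vr pt] show ?thesis
        proof
          assume "(fst p, snd p @ snd r) = p"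
          then show ?thesis using \<open>p \<in> Mx\<close> unfolding P_def by simp
        next
          assume "delta (fst p, snd p @ snd r) \<in> I"
          then show ?thesis unfolding P_def by blast
        qed
      next
        assume "r \<in> Mx"
        then have rM: "r \<in> maximal_paths V E s t I" unfolding Mx_def .
        from maxL[OF q Iid rM vp pt] show ?thesis
        proof
          assume "(fst p, snd p @ snd r) = r"
          then show ?thesis using \<open>r \<in> Mx\<close> unfolding P_def by simp
        next
          assume "delta (fst p, snd p @ snd r) \<in> I"
          then show ?thesis unfolding P_def by blast
        qed
      qed
    qed
  qed
  have "MI \<subseteq> S" unfolding MI_def S_def by (rule Lset_mono) (simp add: P_def)
  then have I_S: "I \<subseteq> S" using Imono by simp
  have RHS: "{(\<lambda>r. x r + (\<Sum>p\<in>F. c p * delta p r)) | x F c. x \<in> I \<and> F \<subseteq> Mx \<and> finite F} = S"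
  proof
    show "{(\<lambda>r. x r + (\<Sum>p\<in>F. c p * delta p r)) | x F c. x \<in> I \<and> F \<subseteq> Mx \<and> finite F} \<subseteq> S"
    proof
      fix f assume "f \<in> {(\<lambda>r. x r + (\<Sum>p\<in>F. c p * delta p r)) | x F c. x \<in> I \<and> F \<subseteq> Mx \<and> finite F}"
      then obtain x F c where f: "f = (\<lambda>r. x r + (\<Sum>p\<in>F. c p * delta p r))" and x: "x \<in> I"
        and F: "F \<subseteq> Mx" "finite F" by blast
      have "\<forall>p\<in>F. delta p \<in> S"
      proof
        fix p assume "p \<in> F"
        then have "p \<in> Mx" using F by blast
        then show "delta p \<in> S" unfolding S_def by (intro delta_Lset Mx_valid) (simp_all add: P_def)
      qed
      then have "(\<lambda>r. \<Sum>p\<in>F. c p * delta p r) \<in> S" using ideal_sum[OF S_id F(2)] by blast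
      moreover have "x \<in> S" using x I_S by blast
      ultimately have "(\<lambda>r. x r + (\<lambda>r. \<Sum>p\<in>F. c p * delta p r) r) \<in> S"
        by (intro ideal_add[OF S_id])
      then show "f \<in> S" unfolding f by simp
    qed
  next
    show "S \<subseteq> {(\<lambda>r. x r + (\<Sum>p\<in>F. c p * delta p r)) | x F c. x \<in> I \<and> F \<subseteq> Mx \<and> finite F}"
    proof
      fix f assume fS: "f \<in> S"
      have fp: "f \<in> pathalg V E s t" using fS unfolding S_def by (rule Lset_pathalg)
      have fin: "finite {p. f p \<noteq> 0}" using pathalg_finite[OF fp] .
      define F where "F = {p. f p \<noteq> 0 \<and> delta p \<notin> I}"
      define x where "x = (\<lambda>r. if delta r \<in> I then f r else 0)"
      have Ffin: "finite F" unfolding F_def by (rule finite_subset[OF _ fin]) blast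
      have FM: "F \<subseteq> Mx"
      proof
        fix p assume "p \<in> F"
        then have "f p \<noteq> 0" "delta p \<notin> I" unfolding F_def by auto
        then show "p \<in> Mx" using Lset_P[of f V E s t P p] fS unfolding S_def P_def by blast
      qed
      have xI: "x \<in> I"
      proof -
        have "x \<in> MI" unfolding MI_def
        proof (rule Lset_I)
          show "finite {p. x p \<noteq> 0}" by (rule finite_subset[OF _ fin]) (auto simp: x_def)
          fix p assume "x p \<noteq> 0"
          then have "f p \<noteq> 0" "delta p \<in> I" by (auto simp: x_def split: if_splits)
          then show "valid_path V E s t p \<and> delta p \<in> I" using pathalg_valid[OF fp] by blast
        qed
        then show ?thesis using Imono by simp
      qed
      have "f = (\<lambda>r. x r + (\<Sum>p\<in>F. f p * delta p r))"
      proof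
        fix r
        show "f r = x r + (\<Sum>p\<in>F. f p * delta p r)"
        proof -
          have "(\<Sum>p\<in>F. f p * delta p r) = (if r \<in> F then f r else 0)" by (rule sum_delta_at[OF Ffin])
          then show ?thesis by (simp add: x_def F_def)
        qed
      qed
      then show "f \<in> {(\<lambda>r. x r + (\<Sum>p\<in>F. c p * delta p r)) | x F c. x \<in> I \<and> F \<subseteq> Mx \<and> finite F}"
        using xI FM Ffin by blast
    qed
  qed

  have Jp_min: "minimal_over V E s t I (Lset V E s t (\<lambda>r. delta r \<in> I \<or> r = p))" if pM: "p \<in> Mx" for p
  proof -
    define Jp where "Jp = (Lset V E s t (\<lambda>r. delta r \<in> I \<or> r = p) :: (('v, 'a) qpath \<Rightarrow> 'k) set)"
    have pM': "p \<in> maximal_paths V E s t I" using pM unfolding Mx_def .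
    have Jp_id: "is_ideal V E s t Jp" unfolding Jp_def
    proof (rule Lset_ideal[OF q])
      fix p1 r assume vp: "valid_path V E s t p1" and vr: "valid_path V E s t r"
        and pt: "ptarget t p1 = fst r" and h: "(delta p1 \<in> I \<or> p1 = p) \<or> (delta r \<in> I \<or> r = p)"
      show "delta (fst p1, snd p1 @ snd r) \<in> I \<or> (fst p1, snd p1 @ snd r) = p"
      proof (cases "delta p1 \<in> I \<or> delta r \<in> I")
        case True then show ?thesis using IclA[OF vp vr pt] by blast
      next
        case False
        then have "p1 = p \<or> r = p" using h by blast
        then show ?thesis
        proof
          assume e: "p1 = p"
          show ?thesis using maxR[OF q Iid pM' vr] pt unfolding e by blast
        next
          assume e: "r = p"
          show ?thesis using maxL[OF q Iid pM' vp] pt unfolding e by blast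
        qed
      qed
    qed
    have IJ: "I \<subseteq> Jp"
    proof -
      have "MI \<subseteq> Jp" unfolding MI_def Jp_def by (rule Lset_mono) simp
      then show ?thesis using Imono by simp
    qed
    have dJ: "delta p \<in> Jp" unfolding Jp_def by (rule delta_Lset[OF Mx_valid[OF pM]]) simp
    have dI: "delta p \<notin> I" using Mx_notI[OF pM] .
    have "\<forall>K. is_ideal V E s t K \<and> I \<subseteq> K \<and> K \<subseteq> Jp \<longrightarrow> K = I \<or> K = Jp"
    proof (intro allI impI)
      fix K assume K: "is_ideal V E s t K \<and> I \<subseteq> K \<and> K \<subseteq> Jp"
      have Kid: "is_ideal V E s t K" using K by blast
      show "K = I \<or> K = Jp"
      proof (cases "K = I")
        case True then show ?thesis by blast
      next
        case False
        then obtain g where gK: "g \<in> K" and gI: "g \<notin> I" using K by blast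
        have gJ: "g \<in> Jp" using gK K by blast
        have gp: "g \<in> pathalg V E s t" using gJ unfolding Jp_def by (rule Lset_pathalg)
        have fin: "finite {r. g r \<noteq> 0}" using pathalg_finite[OF gp] .
        have gP: "\<And>r. g r \<noteq> 0 \<Longrightarrow> delta r \<in> I \<or> r = p"
          using gJ unfolding Jp_def by (rule Lset_P)
        define g' where "g' = (\<lambda>r. if r = p then 0 else g r)"
        have g'I: "g' \<in> I"
        proof -
          have "g' \<in> MI" unfolding MI_def
          proof (rule Lset_I)
            show "finite {r. g' r \<noteq> 0}" by (rule finite_subset[OF _ fin]) (auto simp: g'_def)
            fix r assume "g' r \<noteq> 0"
            then have "g r \<noteq> 0" "r \<noteq> p" by (auto simp: g'_def split: if_splits)
            then show "valid_path V E s t r \<and> delta r \<in> I" using pathalg_valid[OF gp] gP by blast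
          qed
          then show ?thesis using Imono by simp
        qed
        have gp0: "g p \<noteq> 0"
        proof
          assume "g p = 0"
          then have "g = g'" unfolding g'_def by auto
          then show False using g'I gI by simp
        qed
        have "(\<lambda>r. g r + (-1) * g' r) \<in> K"
          using ideal_add[OF Kid gK ideal_smult[OF Kid, of g' "-1"]] g'I K by blast
        moreover have "(\<lambda>r. g r + (-1) * g' r) = (\<lambda>r. g p * delta p r)"
          by (auto simp: g'_def delta_def)
        ultimately have "(\<lambda>r. g p * delta p r) \<in> K" by simp
        then have "(\<lambda>r. inverse (g p) * (g p * delta p r)) \<in> K" by (rule ideal_smult[OF Kid])
        moreover have "(\<lambda>r. inverse (g p) * (g p * delta p r)) = delta p"
          using gp0 by (simp add: mult.assoc[symmetric])
        ultimately have dK: "delta p \<in> K" by simp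
        have "Jp \<subseteq> K"
        proof
          fix h assume "h \<in> Jp"
          then show "h \<in> K" unfolding Jp_def
          proof (rule Lset_in_ideal[OF Kid])
            fix r assume "valid_path V E s t r" "delta r \<in> I \<or> r = p"
            then show "delta r \<in> K" using dK K by blast
          qed
        qed
        then show ?thesis using K by blast
      qed
    qed
    then show ?thesis unfolding minimal_over_def Jp_def[symmetric] using Jp_id IJ dJ dI by blast
  qed

  have J_S: "J \<subseteq> S" if Jm: "minimal_over V E s t I J" for J
  proof -
    have Jid: "is_ideal V E s t J" and IJ: "I \<subset> J"
      and Jmin: "\<And>K. is_ideal V E s t K \<Longrightarrow> I \<subseteq> K \<Longrightarrow> K \<subseteq> J \<Longrightarrow> K = I \<or> K = J"
      using Jm unfolding minimal_over_def by blast+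
    define L where "L = (\<lambda>N::nat. (Lset V E s t (\<lambda>p. delta p \<in> I \<or> N \<le> length (snd p)) :: (('v, 'a) qpath \<Rightarrow> 'k) set))"
    have L_id: "is_ideal V E s t (L N)" for N unfolding L_def
    proof (rule Lset_ideal[OF q])
      fix p1 r assume vp: "valid_path V E s t p1" and vr: "valid_path V E s t r"
        and pt: "ptarget t p1 = fst r" and h: "(delta p1 \<in> I \<or> N \<le> length (snd p1)) \<or> (delta r \<in> I \<or> N \<le> length (snd r))"
      show "delta (fst p1, snd p1 @ snd r) \<in> I \<or> N \<le> length (snd (fst p1, snd p1 @ snd r))"
      proof (cases "delta p1 \<in> I \<or> delta r \<in> I")
        case True then show ?thesis using IclA[OF vp vr pt] by blast
      next
        case False then show ?thesis using h by auto
      qed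
    qed
    have IL: "I \<subseteq> L N" for N
    proof -
      have "MI \<subseteq> L N" unfolding MI_def L_def by (rule Lset_mono) simp
      then show ?thesis using Imono by simp
    qed
    have dich: "J \<inter> L N = I \<or> J \<inter> L N = J" for N
      using Jmin[OF ideal_Int[OF Jid L_id] ] IL IJ by blast
    have Lm: "J \<inter> L m = I"
    proof
      show "I \<subseteq> J \<inter> L m" using IL IJ by blast
      show "J \<inter> L m \<subseteq> I"
      proof
        fix f assume "f \<in> J \<inter> L m"
        then have "f \<in> L m" by blast
        then show "f \<in> I" unfolding L_def
        proof (rule Lset_in_ideal[OF Iid])
          fix p assume "valid_path V E s t p" "delta p \<in> I \<or> m \<le> length (snd p)"
          then show "delta p \<in> I" using adm2 by blast
        qed
      qed
    qed
    define n where "n = (LEAST n. J \<inter> L n = I)"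
    have n1: "J \<inter> L n = I" unfolding n_def by (rule LeastI[of _ m]) (rule Lm)
    have L0: "J \<inter> L 0 = J"
    proof -
      have "J \<subseteq> L 0"
      proof
        fix f assume "f \<in> J"
        then have fp: "f \<in> pathalg V E s t" using ideal_sub[OF Jid] by blast
        show "f \<in> L 0" unfolding L_def
          by (rule Lset_I[OF pathalg_finite[OF fp]]) (simp add: pathalg_valid[OF fp])
      qed
      then show ?thesis by blast
    qed
    have "n \<noteq> 0" using n1 L0 IJ by auto
    then obtain N where nN: "n = Suc N" by (cases n) auto
    have "J \<inter> L N \<noteq> I"
    proof
      assume "J \<inter> L N = I"
      then have "n \<le> N" unfolding n_def by (rule Least_le)
      then show False using nN by simp
    qed
    then have JLN: "J \<subseteq> L N" using dich[of N] by blast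
    have JLSN: "J \<inter> L (Suc N) = I" using n1 nN by simp
    show "J \<subseteq> S"
    proof
      fix g assume gJ: "g \<in> J"
      have gp: "g \<in> pathalg V E s t" using gJ ideal_sub[OF Jid] by blast
      have gL: "g \<in> L N" using gJ JLN by blast
      have gLP: "\<And>r. g r \<noteq> 0 \<Longrightarrow> delta r \<in> I \<or> N \<le> length (snd r)"
        using gL unfolding L_def by (rule Lset_P)
      show "g \<in> S" unfolding S_def
      proof (rule Lset_I[OF pathalg_finite[OF gp]])
        fix r assume gr: "g r \<noteq> 0"
        have vr: "valid_path V E s t r" using pathalg_valid[OF gp gr] .
        show "valid_path V E s t r \<and> P r"
        proof (cases "delta r \<in> I")
          case True then show ?thesis using vr unfolding P_def by blast
        next
          case False
          have lenr: "N \<le> length (snd r)" using gLP[OF gr] False by blast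
          have "\<forall>a\<in>E. pmult t (delta (arrow_path s a)) (delta r) \<in> I \<and> pmult t (delta r) (delta (arrow_path s a)) \<in> I"
          proof
            fix a assume aE: "a \<in> E"
            have va: "valid_path V E s t (s a, [a])"
            proof -
              have "t a \<in> V" "s a \<in> V" using q aE unfolding quiver_def by blast+
              then show ?thesis using valid_Cons[OF q, of "s a" a "[]"] aE by (simp add: valid_Nil)
            qed
            have daP: "delta (s a, [a]) \<in> pathalg V E s t" by (rule delta_pathalg[OF va])
            show "pmult t (delta (arrow_path s a)) (delta r) \<in> I \<and> pmult t (delta r) (delta (arrow_path s a)) \<in> I"
            proof
              show "pmult t (delta (arrow_path s a)) (delta r) \<in> I"
              proof (cases "t a = fst r")
                case False
                then show ?thesis using ideal_zero[OF Iid]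
                  by (simp add: pmult_delta arrow_path_def ptarget_def)
              next
                case True
                define h where "h = pmult t (delta (s a, [a])) g"
                have hJ: "h \<in> J" unfolding h_def by (rule ideal_multL[OF Jid gJ daP])
                have hL: "h \<in> L (Suc N)" unfolding L_def
                proof (rule Lset_I)
                  have hp: "h \<in> pathalg V E s t" unfolding h_def by (rule pmult_pathalg[OF q daP gp])
                  show "finite {p. h p \<noteq> 0}" by (rule pathalg_finite[OF hp])
                  fix r'' assume "h r'' \<noteq> 0"
                  then have vr'': "valid_path V E s t r''" using pathalg_valid[OF hp] by blast
                  from \<open>h r'' \<noteq> 0\<close> obtain p0 q0 where h0: "delta (s a, [a]) p0 \<noteq> (0::'k)" "g q0 \<noteq> 0"
                    "ptarget t p0 = fst q0" "r'' = (fst p0, snd p0 @ snd q0)"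
                    unfolding h_def using pmult_nz by blast
                  have p0: "p0 = (s a, [a])" using h0(1) by (simp add: delta_def split: if_splits)
                  have vq0: "valid_path V E s t q0" using pathalg_valid[OF gp h0(2)] .
                  have "delta q0 \<in> I \<or> N \<le> length (snd q0)" using gLP[OF h0(2)] .
                  then show "valid_path V E s t r'' \<and> (delta r'' \<in> I \<or> Suc N \<le> length (snd r''))"
                  proof
                    assume "delta q0 \<in> I"
                    then have "delta r'' \<in> I" using IclA[OF va vq0] h0(3,4) p0 by simp
                    then show ?thesis using vr'' by blast
                  next
                    assume "N \<le> length (snd q0)"
                    then show ?thesis using vr'' h0(4) p0 by simp
                  qed
                qed
                have hI: "h \<in> I" using hJ hL JLSN by blast
                have "h (fst (s a, [a]), snd (s a, [a]) @ snd r) = g r"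
                  unfolding h_def by (rule pmult_single) (simp add: ptarget_def True)
                then have "h (s a, [a] @ snd r) \<noteq> 0" using gr by simp
                then have "delta (s a, [a] @ snd r) \<in> I" using I_coef[OF hI] by blast
                then show ?thesis using True by (simp add: pmult_delta arrow_path_def ptarget_def)
              qed
            next
              show "pmult t (delta r) (delta (arrow_path s a)) \<in> I"
              proof (cases "ptarget t r = s a")
                case False
                then show ?thesis using ideal_zero[OF Iid]
                  by (simp add: pmult_delta arrow_path_def)
              next
                case True
                define h where "h = pmult t g (delta (s a, [a]))"
                have hJ: "h \<in> J" unfolding h_def by (rule ideal_multR[OF Jid gJ daP])
                have hL: "h \<in> L (Suc N)" unfolding L_def
                proof (rule Lset_I)
                  have hp: "h \<in> pathalg V E s t" unfolding h_def by (rule pmult_pathalg[OF q gp daP])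
                  show "finite {p. h p \<noteq> 0}" by (rule pathalg_finite[OF hp])
                  fix r'' assume "h r'' \<noteq> 0"
                  then have vr'': "valid_path V E s t r''" using pathalg_valid[OF hp] by blast
                  from \<open>h r'' \<noteq> 0\<close> obtain p0 q0 where h0: "g p0 \<noteq> 0" "delta (s a, [a]) q0 \<noteq> (0::'k)"
                    "ptarget t p0 = fst q0" "r'' = (fst p0, snd p0 @ snd q0)"
                    unfolding h_def using pmult_nz by blast
                  have q0: "q0 = (s a, [a])" using h0(2) by (simp add: delta_def split: if_splits)
                  have vp0: "valid_path V E s t p0" using pathalg_valid[OF gp h0(1)] .
                  have "delta p0 \<in> I \<or> N \<le> length (snd p0)" using gLP[OF h0(1)] .
                  then show "valid_path V E s t r'' \<and> (delta r'' \<in> I \<or> Suc N \<le> length (snd r''))"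
                  proof
                    assume "delta p0 \<in> I"
                    then have "delta r'' \<in> I" using IclA[OF vp0 va] h0(3,4) q0 by simp
                    then show ?thesis using vr'' by blast
                  next
                    assume "N \<le> length (snd p0)"
                    then show ?thesis using vr'' h0(4) q0 by simp
                  qed
                qed
                have hI: "h \<in> I" using hJ hL JLSN by blast
                have "h (fst r, snd r @ snd (s a, [a])) = g r"
                  unfolding h_def by (rule pmult_single_right) (simp add: True)
                then have "h (fst r, snd r @ [a]) \<noteq> 0" using gr by simp
                then have "delta (fst r, snd r @ [a]) \<in> I" using I_coef[OF hI] by blast
                then show ?thesis using True by (simp add: pmult_delta arrow_path_def)
              qed
            qed
          qed
          then have "r \<in> Mx" unfolding Mx_def maximal_paths_def using vr False by blast
          then show ?thesis using vr unfolding P_def by blast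
        qed
      qed
    qed
  qed
  have soc: "socle_preimage V E s t I = S"
  proof
    show "socle_preimage V E s t I \<subseteq> S"
      unfolding socle_preimage_def using S_id I_S J_S by blast
  next
    show "S \<subseteq> socle_preimage V E s t I"
      unfolding socle_preimage_def
    proof (rule Inter_greatest)
      fix K assume "K \<in> {K. is_ideal V E s t K \<and> I \<subseteq> K \<and> (\<forall>J. minimal_over V E s t I J \<longrightarrow> J \<subseteq> K)}"
      then have Kid: "is_ideal V E s t K" and IK: "I \<subseteq> K"
        and JK: "\<And>J. minimal_over V E s t I J \<Longrightarrow> J \<subseteq> K" by blast+
      show "S \<subseteq> K"
      proof
        fix f assume "f \<in> S"
        then show "f \<in> K" unfolding S_def
        proof (rule Lset_in_ideal[OF Kid])
          fix p assume vp: "valid_path V E s t p" and Pp: "P p"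
          show "delta p \<in> K"
          proof (cases "delta p \<in> I")
            case True then show ?thesis using IK by blast
          next
            case False
            then have pM: "p \<in> Mx" using Pp unfolding P_def by blast
            have "delta p \<in> Lset V E s t (\<lambda>r. delta r \<in> I \<or> r = p)" by (rule delta_Lset[OF vp]) simp
            then show ?thesis using JK[OF Jp_min[OF pM]] by blast
          qed
        qed
      qed
    qed
  qed
  show ?thesis using part1 soc RHS unfolding Mx_def by simp
qed

end
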